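(* Let $q(n)$ denote the number of partitions of $n$ into distinct parts, with $q(0)=1$ and $q(n)=0$ for $n<0$, and define $s(n)=q(n)-2q(n-1)+q(n-2)$. Then for every integer $n\ge 6$, $s(n)$ equals the number of partitions of $n$ with parts $q_1\ge q_2\ge\dots\ge q_h$ such that $h\ge 4$, $q_j-q_{j+1}\in\{0,1\}$ for all $1\le j<h$, $q_1=q_2$, and the three smallest parts are $q_{h-2}=3$, $q_{h-1}=2$, $q_h=1$.
   Context: $q(n)$ counts strict partitions (partitions into distinct parts) of $n$. *)

theory Defs
  imports Main
begin

definition is_partition :: "nat \<Rightarrow> nat list \<Rightarrow> bool" where
  "is_partition n xs \<longleftrightarrow> sorted_wrt (\<ge>) xs \<and> (\<forall>x\<in>set xs. 0 < x) \<and> sum_list xs = n"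

definition strict_partitions :: "nat \<Rightarrow> nat list set" where
  "strict_partitions n = {xs. is_partition n xs \<and> distinct xs}"

definition q :: "int \<Rightarrow> int" where
  "q n = (if n < 0 then 0 else int (card (strict_partitions (nat n))))"

definition s :: "int \<Rightarrow> int" where
  "s n = q n - 2 * q (n - 1) + q (n - 2)"

definition special_partitions :: "nat \<Rightarrow> nat list set" where
  "special_partitions n = {xs. is_partition n xs \<and>
      (let h = length xs in
        h \<ge> 4 \<and>
        (\<forall>j. j + 1 < h \<longrightarrow> xs ! j - xs ! (j + 1) \<in> {0, 1}) \<and>
        xs ! 0 = xs ! 1 \<and>
        xs ! (h - 3) = 3 \<and> xs ! (h - 2) = 2 \<and> xs ! (h - 1) = 1)}"

end

theory Submission
  imports Defs
begin


fun gl :: "nat list \<Rightarrow> bool" where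
  "gl [] = True"
| "gl [x] = (x = 1)"
| "gl (x # y # zs) = ((x = y \<or> x = Suc y) \<and> gl (y # zs))"

definition R :: "nat \<Rightarrow> nat \<Rightarrow> bool" where "R x y \<longleftrightarrow> x = y \<or> x = Suc y"

lemma gl_alt: "gl xs \<longleftrightarrow> successively R xs \<and> (xs \<noteq> [] \<longrightarrow> last xs = 1)"
  by (induction xs rule: gl.induct) (auto simp: R_def)

lemma gl_sorted: "gl xs \<Longrightarrow> sorted_wrt (\<ge>) xs"
proof -
  assume "gl xs"
  then have "successively R xs" by (simp add: gl_alt)
  then have "successively (\<ge>) xs" by (rule successively_mono) (auto simp: R_def)
  then show ?thesis by (subst (asm) successively_conv_sorted_wrt) (auto simp: transp_def)
qed

lemma gl_pos: "gl xs \<Longrightarrow> x \<in> set xs \<Longrightarrow> 0 < x"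
  by (induction xs rule: gl.induct) auto

lemma gl_cover: "gl (a # xs) \<Longrightarrow> 1 \<le> v \<Longrightarrow> v \<le> a \<Longrightarrow> v \<in> set (a # xs)"
proof (induction "a # xs" arbitrary: a xs rule: gl.induct)
  case (2 x)
  then show ?case by auto
next
  case (3 x y zs)
  then show ?case by (cases "v = x") auto
qed

lemma length_le_sum: "(\<forall>x\<in>set xs. 0 < (x::nat)) \<Longrightarrow> length xs \<le> sum_list xs"
  by (induction xs) auto

lemma elem_le_sum: "(x::nat) \<in> set xs \<Longrightarrow> x \<le> sum_list xs"
  by (induction xs) auto

lemma finite_pos_lists: "finite {xs::nat list. (\<forall>x\<in>set xs. 0 < x) \<and> sum_list xs = n}"
proof (rule finite_subset[OF _ finite_lists_length_le[OF finite_atMost, of n n]])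
  show "{xs::nat list. (\<forall>x\<in>set xs. 0 < x) \<and> sum_list xs = n} \<subseteq> {xs. set xs \<subseteq> {..n} \<and> length xs \<le> n}"
    using length_le_sum elem_le_sum by fastforce
qed

definition G :: "nat \<Rightarrow> nat list set" where "G n = {xs. gl xs \<and> sum_list xs = n}"

lemma finite_G: "finite (G n)"
  by (rule finite_subset[OF _ finite_pos_lists[of n]]) (auto simp: G_def gl_pos)

lemma finite_strict: "finite (strict_partitions n)"
  by (rule finite_subset[OF _ finite_pos_lists[of n]]) (auto simp: strict_partitions_def is_partition_def)

definition cnt :: "nat list \<Rightarrow> nat \<Rightarrow> nat" where "cnt xs j = length (filter (\<lambda>x. j < x) xs)"

definition cnj :: "nat list \<Rightarrow> nat list" where
  "cnj xs = map (cnt xs) [0..<(case xs of [] \<Rightarrow> 0 | x # _ \<Rightarrow> x)]"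

lemma sum_ind: "sum_list (map (\<lambda>j. if j < x then 1 else 0) [0..<m]) = min x (m::nat)"
  by (induction m) auto

lemma sum_cnt: "sum_list (map (cnt xs) [0..<m]) = sum_list (map (\<lambda>x. min x m) xs)"
proof (induction xs)
  case Nil
  then show ?case by (simp add: cnt_def)
next
  case (Cons a xs)
  have "cnt (a # xs) = (\<lambda>j. (if j < a then 1 else 0) + cnt xs j)"
    by (auto simp: cnt_def)
  then show ?case using Cons by (simp add: sum_list_addf sum_ind)
qed

lemma sum_cnj: "sorted_wrt (\<ge>) xs \<Longrightarrow> sum_list (cnj xs) = sum_list xs"
proof (cases xs)
  case Nil
  then show ?thesis by (simp add: cnj_def)
next
  case (Cons a rest)
  assume s: "sorted_wrt (\<ge>) xs"
  have "map (\<lambda>x. min x a) xs = xs" using s Cons by (auto intro!: map_idI)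
  then show ?thesis using Cons sum_cnt[of xs a] by (simp add: cnj_def)
qed

lemma cnt_less: "sorted_wrt (\<ge>) xs \<Longrightarrow> (i < cnt xs j) \<longleftrightarrow> (i < length xs \<and> j < xs ! i)"
proof (induction xs arbitrary: i)
  case Nil
  then show ?case by (simp add: cnt_def)
next
  case (Cons a xs)
  show ?case
  proof (cases "j < a")
    case True
    then show ?thesis using Cons by (cases i) (auto simp: cnt_def)
  next
    case False
    then have "filter (\<lambda>x. j < x) xs = []" using Cons.prems by (auto simp: filter_empty_conv)
    moreover have "i < length (a # xs) \<Longrightarrow> (a # xs) ! i \<le> a" using Cons.prems
      by (cases i) auto
    ultimately show ?thesis using False by (auto simp: cnt_def)
  qed
qed

lemma len_filter_upt: "length (filter (\<lambda>j. j < b) [0..<a]) = min b (a::nat)"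
  by (induction a) auto

lemma cnj_cnj: "sorted_wrt (\<ge>) xs \<Longrightarrow> (\<forall>x\<in>set xs. 0 < x) \<Longrightarrow> cnj (cnj xs) = xs"
proof (cases xs)
  case Nil
  then show ?thesis by (simp add: cnj_def)
next
  case (Cons a rest)
  assume s: "sorted_wrt (\<ge>) xs" and p: "\<forall>x\<in>set xs. 0 < x"
  then have a0: "0 < a" using Cons by auto
  have c0: "cnt xs 0 = length xs" using p by (auto simp: cnt_def)
  have hd: "cnj xs = cnt xs 0 # map (cnt xs) [1..<a]" using Cons a0
    by (simp add: cnj_def upt_rec)
  have len: "length (cnj (cnj xs)) = length xs" using hd c0 by (simp add: cnj_def)
  show ?thesis
  proof (rule nth_equalityI)
    show "length (cnj (cnj xs)) = length xs" by (rule len)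
  next
    fix i assume "i < length (cnj (cnj xs))"
    then have i: "i < length xs" using len by simp
    have le: "xs ! i \<le> a" using s i Cons by (cases i) auto
    have "cnj (cnj xs) ! i = cnt (cnj xs) i" using hd c0 i by (simp add: cnj_def)
    also have "\<dots> = length (filter (\<lambda>j. i < cnt xs j) [0..<a])"
      using Cons by (simp add: cnt_def cnj_def filter_map comp_def)
    also have "\<dots> = length (filter (\<lambda>j. j < xs ! i) [0..<a])"
      using cnt_less[OF s] i by simp
    also have "\<dots> = xs ! i" using le by (simp add: len_filter_upt)
    finally show "cnj (cnj xs) ! i = xs ! i" .
  qed
qed



lemma cnt_step: "cnt xs j = cnt xs (Suc j) + length (filter (\<lambda>x. x = Suc j) xs)"
  by (induction xs) (auto simp: cnt_def)

lemma distinct_filter_eq: "distinct xs \<Longrightarrow> length (filter (\<lambda>x. x = v) xs) \<le> 1"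
proof -
  assume "distinct xs"
  then have d: "distinct (filter (\<lambda>x. x = v) xs)" by simp
  have "set (filter (\<lambda>x. x = v) xs) \<subseteq> {v}" by auto
  then have "card (set (filter (\<lambda>x. x = v) xs)) \<le> 1"
    using card_mono[of "{v}"] by fastforce
  then show ?thesis using distinct_card[OF d] by simp
qed

lemma member_filter_eq: "v \<in> set xs \<Longrightarrow> 1 \<le> length (filter (\<lambda>x. x = v) xs)"
  by (induction xs) auto

lemma sorted_gt_distinct: "sorted_wrt (>) xs \<Longrightarrow> distinct (xs::nat list)"
  by (induction xs) auto

lemma cnj_strict:
  assumes "xs \<in> strict_partitions n" shows "cnj xs \<in> G n"
proof (cases xs)
  case Nil
  then show ?thesis using assms by (simp add: cnj_def G_def strict_partitions_def is_partition_def)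
next
  case (Cons a rest)
  from assms have s: "sorted_wrt (\<ge>) xs" and p: "\<forall>x\<in>set xs. 0 < x" and sm: "sum_list xs = n"
    and d: "distinct xs"
    by (auto simp: strict_partitions_def is_partition_def)
  have a0: "0 < a" using p Cons by auto
  have rl: "\<forall>x\<in>set rest. x < a"
  proof
    fix x assume "x \<in> set rest"
    then have "x \<le> a" "x \<noteq> a" using s d Cons by auto
    then show "x < a" by simp
  qed
  have c: "cnj xs = map (cnt xs) [0..<a]" using Cons by (simp add: cnj_def)
  have succ: "successively R (cnj xs)"
    unfolding successively_conv_nth
  proof (intro allI impI)
    fix i assume "Suc i < length (cnj xs)"
    then have "Suc i < a" using c by simp
    then have "cnj xs ! i = cnt xs i" "cnj xs ! Suc i = cnt xs (Suc i)" using c by auto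
    then show "R (cnj xs ! i) (cnj xs ! Suc i)"
      using cnt_step[of xs i] distinct_filter_eq[OF d, of "Suc i"] unfolding R_def
      by (metis add.right_neutral le_Suc_eq le_zero_eq plus_1_eq_Suc add.commute)
  qed
  have "last (cnj xs) = cnt xs (a - 1)" using c a0 by (simp add: last_map)
  also have "\<dots> = 1" using rl a0 Cons
    by (auto simp: cnt_def filter_empty_conv)
  finally have "last (cnj xs) = 1" .
  then have "gl (cnj xs)" using succ by (simp add: gl_alt)
  then show ?thesis using sum_cnj[OF s] sm by (simp add: G_def)
qed

lemma cnj_G:
  assumes "xs \<in> G n" shows "cnj xs \<in> strict_partitions n"
proof (cases xs)
  case Nil
  then show ?thesis using assms by (simp add: cnj_def G_def strict_partitions_def is_partition_def)
next
  case (Cons a rest)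
  from assms have g: "gl xs" and sm: "sum_list xs = n" by (auto simp: G_def)
  have s: "sorted_wrt (\<ge>) xs" using gl_sorted[OF g] .
  have a0: "0 < a" using gl_pos[OF g] Cons by auto
  have c: "cnj xs = map (cnt xs) [0..<a]" using Cons by (simp add: cnj_def)
  have ss: "sorted_wrt (>) (cnj xs)"
    unfolding sorted_wrt_iff_nth_Suc_transp[OF transp_on_greater]
  proof (intro allI impI)
    fix i assume "Suc i < length (cnj xs)"
    then have si: "Suc i < a" using c by simp
    then have "cnj xs ! i = cnt xs i" "cnj xs ! Suc i = cnt xs (Suc i)" using c by auto
    moreover have "Suc i \<in> set xs" using gl_cover[of a rest "Suc i"] g Cons si by auto
    ultimately show "cnj xs ! i > cnj xs ! Suc i"
      using cnt_step[of xs i] member_filter_eq[of "Suc i" xs] by auto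
  qed
  have d: "distinct (cnj xs)" using ss by (rule sorted_gt_distinct)
  have s2: "sorted_wrt (\<ge>) (cnj xs)" using ss by (rule sorted_wrt_mono_rel[rotated]) auto
  have p2: "\<forall>x\<in>set (cnj xs). 0 < x"
  proof
    fix x assume "x \<in> set (cnj xs)"
    then obtain j where "j < a" "x = cnt xs j" using c by auto
    then show "0 < x" using Cons by (auto simp: cnt_def filter_empty_conv)
  qed
  show ?thesis using d s2 p2 sum_cnj[OF s] sm
    by (simp add: strict_partitions_def is_partition_def)
qed

lemma card_G: "card (strict_partitions n) = card (G n)"
proof (rule bij_betw_same_card[of cnj])
  show "bij_betw cnj (strict_partitions n) (G n)"
  proof (rule bij_betw_byWitness[of _ cnj])
    show "\<forall>a\<in>strict_partitions n. cnj (cnj a) = a"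
      by (auto intro!: cnj_cnj simp: strict_partitions_def is_partition_def)
    show "\<forall>a\<in>G n. cnj (cnj a) = a"
      by (auto intro!: cnj_cnj gl_sorted gl_pos simp: G_def)
    show "cnj ` strict_partitions n \<subseteq> G n" using cnj_strict by auto
    show "cnj ` G n \<subseteq> strict_partitions n" using cnj_G by auto
  qed
qed



definition A :: "nat \<Rightarrow> nat list set" where
  "A n = {xs. gl xs \<and> sum_list xs = n \<and> (\<exists>ys. xs = ys @ [2,1])}"
definition P :: "nat \<Rightarrow> nat list set" where
  "P n = {xs \<in> A n. \<exists>a ys. xs = a # a # ys}"
definition Sp :: "nat \<Rightarrow> nat list set" where
  "Sp n = {xs \<in> P n. \<exists>ys. xs = ys @ [3,2,1]}"

lemma finite_A: "finite (A n)"
  by (rule finite_subset[OF _ finite_G[of n]]) (auto simp: A_def G_def)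
lemma finite_P: "finite (P n)"
  by (rule finite_subset[OF _ finite_A[of n]]) (auto simp: P_def)

lemma gl_app: "ys \<noteq> [] \<Longrightarrow> gl (xs @ ys) \<longleftrightarrow> successively R xs \<and> gl ys \<and> (xs = [] \<or> R (last xs) (hd ys))"
  by (auto simp: gl_alt successively_append_iff)

lemma gl_app1: "xs \<noteq> [] \<Longrightarrow> gl xs \<longleftrightarrow> successively R xs \<and> last xs = 1"
  by (auto simp: gl_alt)

lemma step2:
  assumes n: "n \<ge> 2"
  shows "card (G n) = card (G (n-1)) + card (A n)"
proof -
  have sub: "A n \<subseteq> G n" by (auto simp: A_def G_def)
  have "bij_betw (\<lambda>xs. xs @ [1]) (G (n-1)) (G n - A n)"
  proof (rule bij_betw_byWitness[of _ butlast])
    show "\<forall>a\<in>G (n - 1). butlast (a @ [1]) = a" by simp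
    show "(\<lambda>xs. xs @ [1]) ` G (n - 1) \<subseteq> G n - A n"
    proof safe
      fix xs assume xs: "xs \<in> G (n-1)"
      then have ne: "xs \<noteq> []" using n by (auto simp: G_def)
      have g: "gl xs" and sm: "sum_list xs = n - 1" using xs by (auto simp: G_def)
      then have l: "last xs = 1" and sx: "successively R xs" using ne by (auto simp: gl_alt)
      show "xs @ [1] \<in> G n" using g sm n ne l sx by (auto simp: G_def gl_app R_def)
      show "xs @ [1] \<in> A n \<Longrightarrow> False"
      proof -
        assume "xs @ [1] \<in> A n"
        then obtain ys where "xs @ [1] = ys @ [2,1]" by (auto simp: A_def)
        then have "xs = ys @ [2]" by simp
        then show False using l by simp
      qed
    qed
    show "\<forall>a\<in>G n - A n. butlast a @ [1] = a"
    proof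
      fix xs assume "xs \<in> G n - A n"
      then have "xs \<noteq> []" "last xs = 1" using n by (auto simp: G_def gl_alt)
      then show "butlast xs @ [1] = xs" by (metis append_butlast_last_id)
    qed
    show "butlast ` (G n - A n) \<subseteq> G (n - 1)"
    proof safe
      fix xs assume xs: "xs \<in> G n" "xs \<notin> A n"
      then have ne: "xs \<noteq> []" and g: "gl xs" and sm: "sum_list xs = n" using n by (auto simp: G_def)
      then have "last xs = 1" by (auto simp: gl_alt)
      then obtain zs where zs: "xs = zs @ [1]" using ne by (metis append_butlast_last_id)
      have zne: "zs \<noteq> []" using zs sm n by auto
      have sz: "successively R zs" and Rl: "R (last zs) 1" using g zs zne by (auto simp: gl_app)
      have "last zs \<noteq> 2"
      proof
        assume "last zs = 2"
        then have "zs = butlast zs @ [2]" using zne by (metis append_butlast_last_id)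
        then have "xs \<in> A n" using zs g sm by (auto simp: A_def)
        then show False using xs by simp
      qed
      then have "last zs = 1" using Rl by (auto simp: R_def)
      then have "gl zs" using sz zne by (simp add: gl_app1)
      then show "butlast xs \<in> G (n-1)" using zs sm by (auto simp: G_def)
    qed
  qed
  then have "card (G (n-1)) = card (G n - A n)" by (rule bij_betw_same_card)
  moreover have "card (G n) = card (G n - A n) + card (A n)"
    using card_Diff_subset[OF finite_A sub] card_mono[OF finite_G sub] by simp
  ultimately show ?thesis by simp
qed

lemma step3:
  assumes n: "n \<ge> 4"
  shows "card (A n) = card (P n) + card (P (n-1))"
proof -
  have sub: "P n \<subseteq> A n" by (auto simp: P_def)
  have "bij_betw (\<lambda>xs. Suc (hd xs) # tl xs) (P (n-1)) (A n - P n)"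
  proof (rule bij_betw_byWitness[of _ "\<lambda>xs. (hd xs - 1) # tl xs"])
    show "\<forall>xs\<in>P (n - 1). (hd (Suc (hd xs) # tl xs) - 1) # tl (Suc (hd xs) # tl xs) = xs"
      by (auto simp: P_def)
    show "(\<lambda>xs. Suc (hd xs) # tl xs) ` P (n - 1) \<subseteq> A n - P n"
    proof safe
      fix xs assume xs: "xs \<in> P (n-1)"
      then obtain a ys zs where e: "xs = a # a # ys" and z: "xs = zs @ [2,1]" and g: "gl xs"
        and sm: "sum_list xs = n - 1"
        by (auto simp: P_def A_def)
      have "zs \<noteq> []" using e z by auto
      then obtain zs' where zs': "zs = a # zs'" using e z by (cases zs) auto
      have "gl (Suc a # a # ys)" using g e by simp
      moreover have "Suc a # a # ys = (Suc a # zs') @ [2,1]" using z zs' e by simp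
      ultimately show "Suc (hd xs) # tl xs \<in> A n" using e z zs' sm n
        by (auto simp: A_def)
      show "Suc (hd xs) # tl xs \<in> P n \<Longrightarrow> False" using e by (auto simp: P_def)
    qed
    show "\<forall>xs\<in>A n - P n. Suc (hd ((hd xs - 1) # tl xs)) # tl ((hd xs - 1) # tl xs) = xs"
    proof
      fix xs assume xs: "xs \<in> A n - P n"
      then obtain ws where w: "xs = ws @ [2,1]" and g: "gl xs"
        by (auto simp: A_def)
      obtain x y rest where e: "xs = x # y # rest"
      proof (cases ws)
        case Nil
        then show ?thesis using that w by simp
      next
        case (Cons x ws')
        have "ws' @ [2,1] \<noteq> []" by simp
        then obtain y rest where yr: "ws' @ [2,1] = y # rest" by (cases "ws' @ [2,1]") auto
        then show ?thesis using that w Cons by simp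
      qed
      have "x = y \<or> x = Suc y" using g e by simp
      moreover have "x \<noteq> y" using xs e by (auto simp: P_def)
      ultimately have "x = Suc y" by simp
      then show "Suc (hd ((hd xs - 1) # tl xs)) # tl ((hd xs - 1) # tl xs) = xs" using e by simp
    qed
    show "(\<lambda>xs. (hd xs - 1) # tl xs) ` (A n - P n) \<subseteq> P (n - 1)"
    proof safe
      fix xs assume xs: "xs \<in> A n" "xs \<notin> P n"
      then obtain ws where w: "xs = ws @ [2,1]" and g: "gl xs" and sm: "sum_list xs = n"
        by (auto simp: A_def)
      have "ws \<noteq> []" using w sm n by auto
      then obtain x ws' where ws: "ws = x # ws'" by (cases ws) auto
      have "ws' @ [2,1] \<noteq> []" by simp
      then obtain y rest where yr: "ws' @ [2,1] = y # rest" by (cases "ws' @ [2,1]") auto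
      have e: "xs = x # y # rest" using w ws yr by simp
      have "x = y \<or> x = Suc y" using g e by simp
      moreover have "x \<noteq> y" using xs e by (auto simp: P_def)
      ultimately have "x = Suc y" by simp
      then have "gl (y # y # rest)" using g e by simp
      moreover have "y # y # rest = (y # ws') @ [2,1]" using yr by simp
      moreover have "sum_list (y # y # rest) = n - 1" using e sm \<open>x = Suc y\<close> by simp
      ultimately have "y # y # rest \<in> P (n - 1)"
        unfolding P_def A_def mem_Collect_eq by blast
      moreover have "(hd xs - 1) # tl xs = y # y # rest" using e \<open>x = Suc y\<close> by simp
      ultimately show "(hd xs - 1) # tl xs \<in> P (n - 1)" by simp
    qed
  qed
  then have "card (P (n-1)) = card (A n - P n)" by (rule bij_betw_same_card)
  moreover have "card (A n) = card (A n - P n) + card (P n)"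
    using card_Diff_subset[OF finite_P sub] card_mono[OF finite_A sub] by simp
  ultimately show ?thesis by simp
qed


lemma R_last: "gl (zs @ [a, b, c]) \<Longrightarrow> zs \<noteq> [] \<Longrightarrow> R (last zs) a"
  by (simp add: gl_app)

lemma gl_swap: "gl (zs @ [2,1]) \<Longrightarrow> gl (zs @ [2,2,1])"
  by (cases "zs = []") (auto simp: gl_app R_def)

lemma gl_swap2: "gl (ws @ [2,2,1]) \<Longrightarrow> gl (ws @ [2,1])"
  by (cases "ws = []") (auto simp: gl_app R_def)

lemma step4:
  assumes n: "n \<ge> 6"
  shows "card (P n) = card (P (n-2)) + card (Sp n)"
proof -
  have sub: "Sp n \<subseteq> P n" by (auto simp: Sp_def)
  have "bij_betw (\<lambda>xs. butlast xs @ [2,1]) (P (n-2)) (P n - Sp n)"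
  proof (rule bij_betw_byWitness[of _ "\<lambda>xs. butlast (butlast xs) @ [1]"])
    show "\<forall>xs\<in>P (n - 2). butlast (butlast (butlast xs @ [2, 1])) @ [1] = xs"
    proof
      fix xs assume "xs \<in> P (n-2)"
      then obtain zs where "xs = zs @ [2,1]" by (auto simp: P_def A_def)
      then show "butlast (butlast (butlast xs @ [2, 1])) @ [1] = xs"
        by (simp add: butlast_append)
    qed
    show "(\<lambda>xs. butlast xs @ [2,1]) ` P (n - 2) \<subseteq> P n - Sp n"
    proof safe
      fix xs assume xs: "xs \<in> P (n-2)"
      then obtain a ys zs where e: "xs = a # a # ys" and z: "xs = zs @ [2,1]" and g: "gl xs"
        and sm: "sum_list xs = n - 2"
        by (auto simp: P_def A_def)
      have im: "butlast xs @ [2,1] = zs @ [2,2,1]" using z by (simp add: butlast_append)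
      have g2: "gl (zs @ [2,2,1])" using g z gl_swap by simp
      have s2: "sum_list (zs @ [2,2,1]) = n" using sm z n by simp
      have "zs \<noteq> []" using e z by auto
      then obtain zs' where zs': "zs = a # zs'" using e z by (cases zs) auto
      have "\<exists>b rest. zs @ [2,2,1] = b # b # rest"
      proof (cases zs')
        case Nil
        then have "a = 2" using e z zs' by simp
        then show ?thesis using zs' Nil by simp
      next
        case (Cons c zs'')
        then have "a = c" using e z zs' by simp
        then show ?thesis using zs' Cons by simp
      qed
      then have "zs @ [2,2,1] \<in> P n" using g2 s2 unfolding P_def A_def mem_Collect_eq
        by (metis append.assoc append_Cons append_Nil)
      then show "butlast xs @ [2,1] \<in> P n" using im by simp
      show "butlast xs @ [2,1] \<in> Sp n \<Longrightarrow> False"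
      proof -
        assume "butlast xs @ [2,1] \<in> Sp n"
        then obtain ws where "zs @ [2,2,1] = ws @ [3,2,1]" using im by (auto simp: Sp_def)
        then have "zs @ [2] = ws @ [3]" by simp
        then show False by (metis last_snoc numeral_eq_iff semiring_norm(88) semiring_norm(89) numeral_One)
      qed
    qed
    show "\<forall>xs\<in>P n - Sp n. butlast (butlast (butlast xs) @ [1]) @ [2,1] = xs"
    proof
      fix xs assume xs: "xs \<in> P n - Sp n"
      then obtain zs where z: "xs = zs @ [2,1]" and g: "gl xs" and e: "\<exists>a ys. xs = a # a # ys"
        unfolding P_def A_def by blast
      have "zs \<noteq> []" using e z by auto
      then have "R (last zs) 2" using g z by (auto simp: gl_app)
      moreover have "last zs \<noteq> 3"
      proof
        assume "last zs = 3"
        then have "zs = butlast zs @ [3]" using \<open>zs \<noteq> []\<close> by (metis append_butlast_last_id)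
        then have "xs = butlast zs @ [3,2,1]" using z by (metis append.assoc append_Cons append_Nil)
        then show False using xs by (auto simp: Sp_def)
      qed
      ultimately have "last zs = 2" by (auto simp: R_def)
      then have "zs = butlast zs @ [2]" using \<open>zs \<noteq> []\<close> by (metis append_butlast_last_id)
      then show "butlast (butlast (butlast xs) @ [1]) @ [2,1] = xs" using z
        by (metis append.assoc append_Cons append_Nil butlast_snoc)
    qed
    show "(\<lambda>xs. butlast (butlast xs) @ [1]) ` (P n - Sp n) \<subseteq> P (n - 2)"
    proof safe
      fix xs assume xs: "xs \<in> P n" "xs \<notin> Sp n"
      then obtain zs where z: "xs = zs @ [2,1]" and g: "gl xs" and e: "\<exists>a ys. xs = a # a # ys"
        and sm: "sum_list xs = n"
        unfolding P_def A_def by blast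
      have "zs \<noteq> []" using e z by auto
      then have "R (last zs) 2" using g z by (auto simp: gl_app)
      moreover have "last zs \<noteq> 3"
      proof
        assume "last zs = 3"
        then have "zs = butlast zs @ [3]" using \<open>zs \<noteq> []\<close> by (metis append_butlast_last_id)
        then have "xs = butlast zs @ [3,2,1]" using z by (metis append.assoc append_Cons append_Nil)
        then show False using xs by (auto simp: Sp_def)
      qed
      ultimately have "last zs = 2" by (auto simp: R_def)
      then obtain ws where ws: "zs = ws @ [2]" using \<open>zs \<noteq> []\<close> by (metis append_butlast_last_id)
      have x2: "xs = ws @ [2,2,1]" using z ws by simp
      have im: "butlast (butlast xs) @ [1] = ws @ [2,1]" using x2 by (simp add: butlast_append)
      have g2: "gl (ws @ [2,1])" using g x2 gl_swap2 by simp
      have s2: "sum_list (ws @ [2,1]) = n - 2" using sm x2 by simp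
      obtain a ys where e': "xs = a # a # ys" using e by blast
      have "ws \<noteq> []" using x2 sm n by auto
      then obtain ws' where ws': "ws = a # ws'" using e' x2 by (cases ws) auto
      have "\<exists>b rest. ws @ [2,1] = b # b # rest"
      proof (cases ws')
        case Nil
        then have "a = 2" using e' x2 ws' by simp
        then show ?thesis using ws' Nil by simp
      next
        case (Cons c ws'')
        then have "a = c" using e' x2 ws' by simp
        then show ?thesis using ws' Cons by simp
      qed
      then have "ws @ [2,1] \<in> P (n-2)" using g2 s2 unfolding P_def A_def mem_Collect_eq
        by blast
      then show "butlast (butlast xs) @ [1] \<in> P (n-2)" using im by simp
    qed
  qed
  then have "card (P (n-2)) = card (P n - Sp n)" by (rule bij_betw_same_card)
  moreover have "card (P n) = card (P n - Sp n) + card (Sp n)"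
    using card_Diff_subset[OF finite_subset[OF sub finite_P] sub] card_mono[OF finite_P sub] by simp
  ultimately show ?thesis by simp
qed



lemma special_eq: "special_partitions n = Sp n"
proof (intro set_eqI iffI)
  fix xs assume xs: "xs \<in> special_partitions n"
  define h where "h = length xs"
  have ip: "is_partition n xs" and h4: "h \<ge> 4"
    and df: "\<forall>j. j + 1 < h \<longrightarrow> xs ! j - xs ! (j + 1) \<in> {0, 1}"
    and e01: "xs ! 0 = xs ! 1" and e3: "xs ! (h - 3) = 3" and e2: "xs ! (h - 2) = 2"
    and e1: "xs ! (h - 1) = 1"
    using xs by (auto simp: special_partitions_def h_def Let_def)
  have s: "sorted_wrt (\<ge>) xs" and sm: "sum_list xs = n" using ip by (auto simp: is_partition_def)
  have succ: "successively R xs"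
    unfolding successively_conv_nth
  proof (intro allI impI)
    fix i assume i: "Suc i < length xs"
    have "xs ! i \<ge> xs ! Suc i" using sorted_wrt_nth_less[OF s, of i "Suc i"] i by simp
    moreover have "xs ! i - xs ! Suc i \<in> {0,1}" using df i h_def by auto
    ultimately show "R (xs ! i) (xs ! Suc i)" by (auto simp: R_def)
  qed
  have ne: "xs \<noteq> []" using h4 h_def by auto
  have "last xs = 1" using e1 ne h_def by (simp add: last_conv_nth)
  then have g: "gl xs" using succ ne by (simp add: gl_app1)
  have d3: "drop (h - 3) xs = [3,2,1]"
  proof -
    have "drop (h - 3) xs = xs ! (h-3) # drop (Suc (h-3)) xs"
      using h4 h_def by (simp add: Cons_nth_drop_Suc)
    moreover have "drop (Suc (h-3)) xs = xs ! (h-2) # drop (Suc (h-2)) xs"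
      using h4 h_def Cons_nth_drop_Suc[of "h-2" xs] by (simp add: Suc_diff_Suc numeral_3_eq_3 numeral_2_eq_2)
    moreover have "drop (Suc (h-2)) xs = xs ! (h-1) # drop (Suc (h-1)) xs"
      using h4 h_def Cons_nth_drop_Suc[of "h-1" xs] by (simp add: Suc_diff_Suc numeral_2_eq_2)
    moreover have "drop (Suc (h-1)) xs = []" using h4 h_def by simp
    ultimately show ?thesis using e1 e2 e3 by simp
  qed
  then have x3: "xs = take (h-3) xs @ [3,2,1]" by (metis append_take_drop_id)
  then have x2: "xs = (take (h-3) xs @ [3]) @ [2,1]" by simp
  obtain a t where at: "xs = a # t" using ne by (cases xs) auto
  then have "t \<noteq> []" using h4 h_def by auto
  then obtain b rest where "t = b # rest" by (cases t) auto
  then have abr: "xs = a # b # rest" using at by simp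
  then have "a = b" using e01 by simp
  then show "xs \<in> Sp n" using g sm x2 x3 abr unfolding Sp_def P_def A_def mem_Collect_eq by blast
next
  fix xs assume xs: "xs \<in> Sp n"
  then obtain zs a ys where z: "xs = zs @ [3,2,1]" and g: "gl xs" and e: "xs = a # a # ys"
    and sm: "sum_list xs = n"
    unfolding Sp_def P_def A_def by blast
  have "zs \<noteq> []" using z e by auto
  then have h4: "length xs \<ge> 4" using z by (cases zs) auto
  have ip: "is_partition n xs" using gl_sorted[OF g] gl_pos[OF g] sm by (auto simp: is_partition_def)
  have df: "\<forall>j. j + 1 < length xs \<longrightarrow> xs ! j - xs ! (j + 1) \<in> {0, 1}"
  proof (intro allI impI)
    fix j assume "j + 1 < length xs"
    then have "R (xs ! j) (xs ! Suc j)" using g successively_nth[of R xs j] by (simp add: gl_alt)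
    then show "xs ! j - xs ! (j + 1) \<in> {0, 1}" by (auto simp: R_def)
  qed
  have lz: "length xs = length zs + 3" using z by simp
  have "xs ! (length xs - 3) = 3" "xs ! (length xs - 2) = 2" "xs ! (length xs - 1) = 1"
    using z lz by (simp_all add: nth_append)
  moreover have "xs ! 0 = xs ! 1" using e by simp
  ultimately show "xs \<in> special_partitions n" using ip h4 df
    by (simp add: special_partitions_def Let_def)
qed

lemma q_G: "q (int k) = int (card (G k))"
  by (simp add: q_def card_G)

theorem corollary1p5:
  fixes n :: nat
  assumes "n \<ge> 6"
  shows "s (int n) = int (card (special_partitions n))"
proof -
  have q1: "q (int n - 1) = int (card (G (n-1)))" using q_G[of "n-1"] assms by (simp add: of_nat_diff)
  have q2: "q (int n - 2) = int (card (G (n-2)))" using q_G[of "n-2"] assms by (simp add: of_nat_diff)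
  have a1: "card (G n) = card (G (n-1)) + card (A n)" using step2 assms by simp
  have a2: "card (G (n-1)) = card (G (n-2)) + card (A (n-1))" using step2[of "n-1"] assms
    by (simp add: diff_diff_add numeral_2_eq_2)
  have b1: "card (A n) = card (P n) + card (P (n-1))" using step3 assms by simp
  have b2: "card (A (n-1)) = card (P (n-1)) + card (P (n-2))" using step3[of "n-1"] assms
    by (simp add: diff_diff_add numeral_2_eq_2)
  have c1: "card (P n) = card (P (n-2)) + card (Sp n)" using step4 assms by simp
  show ?thesis unfolding s_def q1 q2 q_G special_eq using a1 a2 b1 b2 c1 by simp
qed


end
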